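(* For every $n\ge1$, $$P_{2n}=\sum_{\substack{\lambda\vdash 2n\\ \text{all parts odd}}}(-1)^{\frac12(\ell(\lambda)-2)}\,C_{\frac12(\ell(\lambda)-2)}\,\frac{\ell(\lambda)!}{m_1!\,m_3!\,m_5!\cdots}\,V_\lambda,$$ where $\ell(\lambda)$ is the number of parts of $\lambda$ (necessarily even), $m_i$ is the number of parts equal to $i$, $C_k=\frac{1}{k+1}\binom{2k}{k}$ is the $k$-th Catalan number, and $V_\lambda=P_{\lambda_1}P_{\lambda_2}\cdots$.
   Context: The one-row Schur $P$-functions $P_n$ (symmetric functions in $x=(x_1,x_2,\dots)$ with rational coefficients) are defined by the generating function $1+2\sum_{n\ge1}P_n(x)t^n=\prod_i\frac{1+x_it}{1-x_it}$. For any partition $\lambda$, $V_\lambda=P_{\lambda_1}P_{\lambda_2}\cdots$. *)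

theory Defs
  imports "HOL-Computational_Algebra.Formal_Power_Series" "HOL-Library.Multiset"
begin

text \<open>Generating function prod_{i<N} (1 + x_i t)/(1 - x_i t) in the variables
  x_0, ..., x_{N-1} (a finite specialization of the infinite alphabet).\<close>
definition genP :: "nat \<Rightarrow> (nat \<Rightarrow> rat) \<Rightarrow> rat fps" where
  "genP N x = (\<Prod>i<N. (1 + fps_const (x i) * fps_X) * inverse (1 - fps_const (x i) * fps_X))"

text \<open>One-row Schur P-function P_k evaluated at (x_0,...,x_{N-1},0,0,...):
  1 + 2 sum_{k>=1} P_k t^k = genP; we set P_0 = 1.\<close>
definition schurP :: "nat \<Rightarrow> nat \<Rightarrow> (nat \<Rightarrow> rat) \<Rightarrow> rat" where
  "schurP N k x = (if k = 0 then 1 else fps_nth (genP N x) k / 2)"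

definition V :: "nat \<Rightarrow> nat multiset \<Rightarrow> (nat \<Rightarrow> rat) \<Rightarrow> rat" where
  "V N lam x = (\<Prod>k\<in>#lam. schurP N k x)"

definition catalan :: "nat \<Rightarrow> rat" where
  "catalan k = of_nat ((2*k) choose k) / of_nat (k + 1)"

end

theory Submission imports Defs "HOL-Combinatorics.Multiset_Permutations"
begin
unbundle fps_syntax

definition twist :: "rat fps \<Rightarrow> rat fps" where
  "twist f = Abs_fps (\<lambda>n. (-1)^n * f $ n)"

lemma twist_nth[simp]: "twist f $ n = (-1)^n * f $ n"
  by (simp add: twist_def)

lemma twist_mult: "twist (f * g) = twist f * twist g"
proof (rule fps_ext)
  fix n
  have "twist (f * g) $ n = (\<Sum>i=0..n. (-1)^n * (f$i * g$(n-i)))"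
    by (simp add: fps_mult_nth sum_distrib_left)
  also have "\<dots> = (\<Sum>i=0..n. ((-1)^i * f$i) * ((-1)^(n-i) * g$(n-i)))"
  proof (rule sum.cong[OF refl])
    fix i assume "i \<in> {0..n}"
    then have "(-1::rat)^n = (-1)^i * (-1)^(n-i)" by (simp flip: power_add)
    then show "(-1)^n * (f$i * g$(n-i)) = ((-1)^i * f$i) * ((-1)^(n-i) * g$(n-i))" by simp
  qed
  also have "\<dots> = (twist f * twist g) $ n" by (simp add: fps_mult_nth)
  finally show "twist (f * g) $ n = (twist f * twist g) $ n" .
qed

lemma twist_1[simp]: "twist 1 = 1"
  by (rule fps_ext) (simp add: fps_one_nth)

lemma twist_add: "twist (f + g) = twist f + twist g"
  by (rule fps_ext) (simp add: algebra_simps)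

lemma twist_lin: "twist (1 + fps_const a * fps_X) = 1 - fps_const a * fps_X"
  by (rule fps_ext) (auto simp: fps_one_nth fps_X_nth le_Suc_eq)

lemma twist_lin2: "twist (1 - fps_const a * fps_X) = 1 + fps_const a * fps_X"
  by (rule fps_ext) (auto simp: fps_one_nth fps_X_nth le_Suc_eq)

lemma twist_inverse: assumes "f $ 0 \<noteq> 0" shows "twist (inverse f) = inverse (twist f)"
proof -
  have "twist f * twist (inverse f) = 1"
    using assms by (simp flip: twist_mult add: inverse_mult_eq_1')
  moreover have "twist f $ 0 \<noteq> 0" using assms by simp
  ultimately show ?thesis
    by (metis fps_inverse_unique mult.commute)
qed

lemma genP_twist: "genP N x * twist (genP N x) = 1"
proof (induction N)
  case 0
  then show ?case by (simp add: genP_def)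
next
  case (Suc N)
  let ?a = "1 + fps_const (x N) * fps_X" and ?b = "1 - fps_const (x N) * fps_X"
  have g: "genP (Suc N) x = genP N x * (?a * inverse ?b)"
    by (simp add: genP_def)
  have t: "twist (genP (Suc N) x) = twist (genP N x) * (?b * inverse ?a)"
  proof -
    have i: "twist (inverse ?b) = inverse ?a"
      by (subst twist_inverse) (simp_all add: twist_lin2)
    show ?thesis unfolding g twist_mult i twist_lin ..
  qed
  have e: "?a * inverse ?a = 1" "?b * inverse ?b = 1"
    by (simp_all add: inverse_mult_eq_1')
  have "genP (Suc N) x * twist (genP (Suc N) x) =
     (genP N x * twist (genP N x)) * ((?a * inverse ?a) * (?b * inverse ?b))"
    unfolding t unfolding g by (simp only: mult_ac)
  then show ?case using Suc e by simp
qed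

lemma genP_0: "genP N x $ 0 = 1"
proof (induction N)
  case 0 then show ?case by (simp add: genP_def)
next
  case (Suc N)
  have "genP (Suc N) x = genP N x * ((1 + fps_const (x N) * fps_X) * inverse (1 - fps_const (x N) * fps_X))"
    by (simp add: genP_def)
  then show ?case using Suc by (simp add: fps_mult_nth_0 fps_inverse_def)
qed

lemma catalan_rec: "of_nat (m+2) * catalan (Suc m) = 2 * of_nat (2*m+1) * catalan m"
proof -
  have a: "Suc (2*m+1) * ((2*m+1) choose m) = ((2*m+2) choose (m+1)) * Suc m"
    using Suc_times_binomial_eq[of "2*m+1" m] by simp
  have b: "Suc (2*m) * ((2*m) choose m) = ((2*m+1) choose (m+1)) * Suc m"
    using Suc_times_binomial_eq[of "2*m" m] by simp
  have c: "((2*m+1) choose (m+1)) = ((2*m+1) choose m)"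
    using binomial_symmetric[of m "2*m+1"] by simp
  have d: "((2*m+2) choose (m+1)) * (m+1) = 2 * (2*m+1) * ((2*m) choose m)"
  proof -
    have "((2*m+2) choose (m+1)) * (m+1) = 2 * ((2*m+1) choose m) * (m+1)"
      using a by (simp add: algebra_simps)
    moreover have nz: "(m+1::nat) \<noteq> 0" by simp
    ultimately have "((2*m+2) choose (m+1)) = 2 * ((2*m+1) choose m)"
      by (simp only: mult_right_cancel[OF nz])
    then show ?thesis using b c by (simp add: algebra_simps)
  qed
  have d1: "rat_of_nat (((2*m+2) choose (m+1)) * (m+1)) = rat_of_nat (2 * (2*m+1) * ((2*m) choose m))"
    using d by (rule arg_cong)
  have e: "2*m+2 = 2 * Suc m" "m+1 = Suc m" by simp_all
  have d': "of_nat ((2 * Suc m) choose (Suc m)) * (of_nat m + 1 :: rat) = 2 * (2 * of_nat m + 1) * of_nat ((2*m) choose m)"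
    using d1 unfolding e by (simp only: of_nat_mult of_nat_add of_nat_Suc of_nat_numeral of_nat_1 of_nat_0 mult_ac add_ac)
  show ?thesis unfolding catalan_def using d'
    by (simp del: binomial_Suc_Suc add: field_simps)
qed

definition acoef :: "nat \<Rightarrow> rat" where
  "acoef m = ((1/2::rat) gchoose (Suc m)) * 4^(Suc m) / 2"

lemma acoef_catalan: "acoef m = (-1)^m * catalan m"
proof (induction m)
  case 0 then show ?case by (simp add: acoef_def catalan_def)
next
  case (Suc m)
  have r: "of_nat (Suc (Suc m)) * ((1/2::rat) gchoose Suc (Suc m)) = (1/2 - of_nat (Suc m)) * ((1/2::rat) gchoose Suc m)"
    using gbinomial_absorption[of "Suc m" "1/2::rat"] gbinomial_absorb_comp[of "1/2::rat" "Suc m"] by simp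
  have "of_nat (m+2) * acoef (Suc m) = (of_nat (Suc (Suc m)) * ((1/2::rat) gchoose Suc (Suc m))) * 4^(Suc (Suc m))/2"
    by (simp add: acoef_def)
  also have "\<dots> = ((1/2 - of_nat (Suc m)) * ((1/2::rat) gchoose Suc m)) * 4^(Suc (Suc m))/2"
    by (simp only: r)
  also have "\<dots> = - (2 * of_nat (2*m+1)) * acoef m"
    by (simp add: acoef_def field_simps)
  also have "\<dots> = - (of_nat (m+2) * catalan (Suc m)) * (-1)^m"
    using Suc catalan_rec[of m] by (simp add: algebra_simps)
  finally have "of_nat (m+2) * acoef (Suc m) = of_nat (m+2) * ((-1)^(Suc m) * catalan (Suc m))"
    by simp
  then show ?case by (subst (asm) mult_left_cancel) auto
qed

lemma main_fps:
  fixes F :: "rat fps"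
  assumes F0: "F$0 = 1" and Ft: "F * twist F = 1" and n: "n \<ge> 1"
  shows "F$(2*n)/2 = (\<Sum>i=0..2*n. ((1/2::rat) gchoose i) * 4^i / 2 *
             (Abs_fps (\<lambda>k. if odd k then F$k/2 else 0) ^ (2*i)) $ (2*n))"
proof -
  define Od where "Od = Abs_fps (\<lambda>k. if odd k then F$k/2 else 0)"
  define Ev where "Ev = Abs_fps (\<lambda>k. if even k \<and> k > 0 then F$k/2 else 0)"
  have hF: "F = 1 + fps_const 2 * Ev + fps_const 2 * Od"
    by (rule fps_ext) (auto simp: Od_def Ev_def F0 fps_one_nth)
  have htF: "twist F = 1 + fps_const 2 * Ev - fps_const 2 * Od"
    by (rule fps_ext) (auto simp: Od_def Ev_def F0 fps_one_nth)
  have c4: "fps_const (2::rat) * fps_const 2 = fps_const 4"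
    by (simp only: fps_const_mult) simp
  have sq: "(1 + fps_const 2 * Ev)^2 = 1 + fps_const 4 * Od^2"
  proof -
    have "(1 + fps_const 2 * Ev + fps_const 2 * Od) * (1 + fps_const 2 * Ev - fps_const 2 * Od) = 1"
      using Ft hF htF by simp
    then have "(1 + fps_const 2 * Ev)^2 = 1 + (fps_const 2 * fps_const 2) * Od^2"
      by (simp add: algebra_simps power2_eq_square)
    then show ?thesis by (simp only: c4)
  qed
  define c where "c = fps_const 4 * Od^2"
  have Od0: "Od $ 0 = 0" by (simp add: Od_def)
  have c0: "c $ 0 = 0" by (simp add: c_def Od0 fps_mult_nth_0)
  define D where "D = fps_binomial (1/2) oo c"
  have "D * D = (fps_binomial (1/2) * fps_binomial (1/2)) oo c"
    unfolding D_def using c0 by (simp add: fps_compose_mult_distrib)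
  also have "fps_binomial (1/2) * fps_binomial (1/2) = fps_binomial (1::rat)"
    by (simp flip: fps_binomial_add_mult)
  also have "fps_binomial (1::rat) oo c = 1 + c"
    using c0 by (simp add: fps_binomial_1 fps_compose_add_distrib)
  finally have D2: "D^2 = 1 + c" by (simp add: power2_eq_square)
  have "(1 + fps_const 2 * Ev - D) * (1 + fps_const 2 * Ev + D) = (1 + fps_const 2 * Ev)^2 - D^2"
    by (simp add: algebra_simps power2_eq_square)
  also have "\<dots> = 0" using sq D2 c_def by simp
  finally have z: "(1 + fps_const 2 * Ev - D) * (1 + fps_const 2 * Ev + D) = 0" .
  have "(1 + fps_const 2 * Ev + D) $ 0 = 2" by (simp add: Ev_def D_def)
  then have "1 + fps_const 2 * Ev + D \<noteq> 0" by (metis fps_zero_nth zero_neq_numeral)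
  with z have ED: "1 + fps_const 2 * Ev = D" by simp
  have "F$(2*n)/2 = Ev $ (2*n)" using n by (simp add: Ev_def)
  also have "\<dots> = D $ (2*n) / 2"
    using arg_cong[OF ED, of "\<lambda>f. f $ (2*n)"] n by (simp add: fps_one_nth)
  also have "D $ (2*n) = (\<Sum>i=0..2*n. ((1/2::rat) gchoose i) * (c^i $ (2*n)))"
    by (simp add: D_def fps_compose_nth)
  also have "\<dots> = (\<Sum>i=0..2*n. ((1/2::rat) gchoose i) * 4^i * ((Od^(2*i)) $ (2*n)))"
  proof (rule sum.cong[OF refl])
    fix i
    have "c^i = fps_const (4^i) * Od^(2*i)"
      by (simp add: c_def power_mult_distrib fps_const_power power_mult)
    then show "((1/2::rat) gchoose i) * (c^i $ (2*n)) = ((1/2::rat) gchoose i) * 4^i * ((Od^(2*i)) $ (2*n))"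
      by simp
  qed
  finally show ?thesis unfolding Od_def[symmetric]
    by (simp add: sum_divide_distrib)
qed

definition Ls :: "nat \<Rightarrow> nat \<Rightarrow> nat list set" where
  "Ls j s = {xs. length xs = j \<and> set xs \<subseteq> {..s} \<and> sum_list xs = s}"

lemma finite_Ls: "finite (Ls j s)"
proof -
  have "Ls j s \<subseteq> {xs. set xs \<subseteq> {..s} \<and> length xs = j}" by (auto simp: Ls_def)
  then show ?thesis using finite_lists_length_eq[of "{..s}" j] by (rule finite_subset) simp
qed

lemma Ls_Suc: "Ls (Suc j) s = (\<lambda>(i,xs). i # xs) ` (SIGMA i:{0..s}. Ls j (s-i))"
proof (rule set_eqI)
  fix ys
  show "ys \<in> Ls (Suc j) s \<longleftrightarrow> ys \<in> (\<lambda>(i,xs). i # xs) ` (SIGMA i:{0..s}. Ls j (s-i))"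
  proof
    assume "ys \<in> Ls (Suc j) s"
    then obtain i xs where ys: "ys = i # xs" and l: "length xs = j" "set (i#xs) \<subseteq> {..s}" "i + sum_list xs = s"
      by (cases ys) (auto simp: Ls_def)
    then have "xs \<in> Ls j (s-i)" "i \<in> {0..s}" by (auto simp: Ls_def member_le_sum_list)
    then show "ys \<in> (\<lambda>(i,xs). i # xs) ` (SIGMA i:{0..s}. Ls j (s-i))" using ys by force
  next
    assume "ys \<in> (\<lambda>(i,xs). i # xs) ` (SIGMA i:{0..s}. Ls j (s-i))"
    then obtain i xs where ys: "ys = i # xs" and i: "i \<le> s" and xs: "xs \<in> Ls j (s-i)" by auto
    then show "ys \<in> Ls (Suc j) s" by (auto simp: Ls_def)
  qed
qed

lemma power_nth_Ls: "((f::rat fps)^j) $ s = (\<Sum>xs\<in>Ls j s. prod_list (map (\<lambda>k. f $ k) xs))"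
proof (induction j arbitrary: s)
  case 0
  have "Ls 0 s = (if s = 0 then {[]} else {})" by (auto simp: Ls_def)
  then show ?case by (simp add: fps_one_nth)
next
  case (Suc j)
  have inj: "inj_on (\<lambda>(i,xs). i # (xs::nat list)) (SIGMA i:{0..s}. Ls j (s-i))"
    by (auto simp: inj_on_def)
  have "(f^Suc j) $ s = (\<Sum>i=0..s. f$i * (f^j) $ (s-i))"
    by (simp add: fps_mult_nth)
  also have "\<dots> = (\<Sum>i=0..s. \<Sum>xs\<in>Ls j (s-i). prod_list (map (\<lambda>k. f $ k) (i#xs)))"
    by (simp add: Suc sum_distrib_left)
  also have "\<dots> = (\<Sum>p\<in>(SIGMA i:{0..s}. Ls j (s-i)). prod_list (map (\<lambda>k. f $ k) ((\<lambda>(i,xs). i # xs) p)))"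
    by (subst sum.Sigma) (auto simp: finite_Ls split_def)
  also have "\<dots> = (\<Sum>xs\<in>Ls (Suc j) s. prod_list (map (\<lambda>k. f $ k) xs))"
    unfolding Ls_Suc by (subst sum.reindex[OF inj]) (simp add: comp_def)
  finally show ?case .
qed

lemma mem_le_sum_mset: "x \<in># A \<Longrightarrow> x \<le> sum_mset (A::nat multiset)"
  by (induction A) auto

lemma size_le_sum_mset: "(\<forall>k\<in>#A. k > 0) \<Longrightarrow> size A \<le> sum_mset (A::nat multiset)"
  by (induction A) auto

lemma parity_sum_mset: "(\<forall>k\<in>#A. odd k) \<Longrightarrow> even (sum_mset (A::nat multiset)) \<longleftrightarrow> even (size A)"
  by (induction A) auto

definition Sj :: "nat \<Rightarrow> nat \<Rightarrow> nat multiset set" where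
  "Sj j s = {lam. (\<forall>k\<in>#lam. odd k) \<and> sum_mset lam = s \<and> size lam = j}"

lemma group_lemma:
  fixes f :: "rat fps"
  assumes ev: "\<And>k. even k \<Longrightarrow> f$k = 0"
  shows "(f^j)$s = (\<Sum>lam\<in>Sj j s. of_nat (card (permutations_of_multiset lam)) * prod_mset (image_mset (\<lambda>k. f$k) lam))"
proof -
  define L' where "L' = {xs \<in> Ls j s. \<forall>x\<in>set xs. odd x}"
  let ?g = "\<lambda>xs. prod_list (map (\<lambda>k. f $ k) xs)"
  have fL': "finite L'" unfolding L'_def using finite_Ls by simp
  have "(f^j)$s = (\<Sum>xs\<in>Ls j s. ?g xs)" by (rule power_nth_Ls)
  also have "\<dots> = (\<Sum>xs\<in>L'. ?g xs)"
  proof (rule sum.mono_neutral_right[OF finite_Ls])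
    show "L' \<subseteq> Ls j s" by (auto simp: L'_def)
    show "\<forall>xs\<in>Ls j s - L'. ?g xs = 0"
    proof
      fix xs assume "xs \<in> Ls j s - L'"
      then obtain x where "x \<in> set xs" "even x" by (auto simp: L'_def)
      then have "0 \<in> set (map (\<lambda>k. f $ k) xs)" using ev by force
      then show "?g xs = 0" by (simp add: prod_list_zero_iff)
    qed
  qed
  also have "\<dots> = (\<Sum>lam\<in>mset ` L'. \<Sum>xs\<in>{xs\<in>L'. mset xs = lam}. ?g xs)"
    by (rule sum.image_gen[OF fL'])
  also have "mset ` L' = Sj j s"
  proof (rule set_eqI, rule iffI)
    fix lam assume "lam \<in> mset ` L'"
    then show "lam \<in> Sj j s" by (auto simp: L'_def Ls_def Sj_def sum_mset_sum_list)
  next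
    fix lam assume lam: "lam \<in> Sj j s"
    obtain xs where xs: "mset xs = lam" using ex_mset by blast
    have "xs \<in> L'" using lam xs mem_le_sum_mset[of _ lam]
      by (auto simp: L'_def Ls_def Sj_def simp flip: sum_mset_sum_list)
    then show "lam \<in> mset ` L'" using xs by blast
  qed
  also have "(\<Sum>lam\<in>Sj j s. \<Sum>xs\<in>{xs\<in>L'. mset xs = lam}. ?g xs) =
     (\<Sum>lam\<in>Sj j s. of_nat (card (permutations_of_multiset lam)) * prod_mset (image_mset (\<lambda>k. f$k) lam))"
  proof (rule sum.cong[OF refl])
    fix lam assume lam: "lam \<in> Sj j s"
    have P: "{xs\<in>L'. mset xs = lam} = permutations_of_multiset lam"
      using lam mem_le_sum_mset[of _ lam]
      by (auto simp: L'_def Ls_def Sj_def permutations_of_multiset_def simp flip: sum_mset_sum_list)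
    have "(\<Sum>xs\<in>{xs\<in>L'. mset xs = lam}. ?g xs) = (\<Sum>xs\<in>permutations_of_multiset lam. prod_mset (image_mset (\<lambda>k. f$k) lam))"
      unfolding P
    proof (rule sum.cong[OF refl])
      fix xs assume "xs \<in> permutations_of_multiset lam"
      then have "mset xs = lam" by (simp add: permutations_of_multiset_def)
      then show "?g xs = prod_mset (image_mset (\<lambda>k. f$k) lam)"
        by (metis mset_map prod_mset_prod_list)
    qed
    then show "(\<Sum>xs\<in>{xs\<in>L'. mset xs = lam}. ?g xs) = of_nat (card (permutations_of_multiset lam)) * prod_mset (image_mset (\<lambda>k. f$k) lam)"
      by simp
  qed
  finally show ?thesis .
qed

lemma finite_Sj: "finite (Sj j s)"
proof -
  have "Sj j s \<subseteq> mset ` Ls j s"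
  proof
    fix lam assume lam: "lam \<in> Sj j s"
    obtain xs where xs: "mset xs = lam" using ex_mset by blast
    have "xs \<in> Ls j s" using lam xs mem_le_sum_mset[of _ lam]
      by (auto simp: Ls_def Sj_def simp flip: sum_mset_sum_list)
    then show "lam \<in> mset ` Ls j s" using xs by blast
  qed
  then show ?thesis using finite_subset finite_imageI[OF finite_Ls] by blast
qed

lemma card_perm_rat: "(of_nat (card (permutations_of_multiset lam)) :: rat) =
   fact (size lam) / (\<Prod>k\<in>set_mset lam. fact (count lam k))"
proof -
  have "(of_nat (card (permutations_of_multiset lam) * (\<Prod>x\<in>set_mset lam. fact (count lam x))) :: rat) = of_nat (fact (size lam))"
    by (simp only: card_permutations_of_multiset_aux)
  then have "(of_nat (card (permutations_of_multiset lam)) :: rat) * (\<Prod>x\<in>set_mset lam. fact (count lam x)) = fact (size lam)"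
    by (simp add: of_nat_fact)
  moreover have "(\<Prod>x\<in>set_mset lam. fact (count lam x) :: rat) \<noteq> 0" by simp
  ultimately show ?thesis by (simp add: field_simps)
qed

theorem corollary3p2:
  fixes n N :: nat and x :: "nat \<Rightarrow> rat"
  assumes "n \<ge> 1"
  shows "schurP N (2*n) x =
    (\<Sum>lam \<in> {lam :: nat multiset. (\<forall>k\<in>#lam. odd k) \<and> sum_mset lam = 2*n}.
       (-1) ^ ((size lam - 2) div 2) * catalan ((size lam - 2) div 2)
       * (fact (size lam) / (\<Prod>k\<in>set_mset lam. fact (count lam k)))
       * V N lam x)"
proof -
  define F where "F = genP N x"
  define Od where "Od = Abs_fps (\<lambda>k. if odd k then F$k/2 else 0)"
  define T where "T j = (Od^j) $ (2*n)" for j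
  define w where "w j = (-1) ^ ((j - 2) div 2) * catalan ((j - 2) div 2)" for j :: nat
  define mult where "mult lam = (fact (size lam) / (\<Prod>k\<in>set_mset lam. fact (count lam k)) :: rat)" for lam :: "nat multiset"
  have A: "schurP N (2*n) x = (\<Sum>i=0..2*n. ((1/2::rat) gchoose i) * 4^i / 2 * T (2*i))"
  proof -
    have "schurP N (2*n) x = F$(2*n)/2" using assms by (simp add: schurP_def F_def)
    also have "\<dots> = (\<Sum>i=0..2*n. ((1/2::rat) gchoose i) * 4^i / 2 * T (2*i))"
      unfolding T_def Od_def F_def by (rule main_fps[OF genP_0 genP_twist assms])
    finally show ?thesis .
  qed
  have B: "T j = (\<Sum>lam\<in>Sj j (2*n). mult lam * V N lam x)" for j
  proof -
    have "T j = (\<Sum>lam\<in>Sj j (2*n). of_nat (card (permutations_of_multiset lam)) * prod_mset (image_mset (\<lambda>k. Od$k) lam))"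
      unfolding T_def by (rule group_lemma) (simp add: Od_def)
    also have "\<dots> = (\<Sum>lam\<in>Sj j (2*n). mult lam * V N lam x)"
    proof (rule sum.cong[OF refl])
      fix lam assume lam: "lam \<in> Sj j (2*n)"
      have "image_mset (\<lambda>k. Od$k) lam = image_mset (\<lambda>k. schurP N k x) lam"
      proof (rule image_mset_cong)
        fix k assume "k \<in># lam"
        then have "odd k" using lam by (simp add: Sj_def)
        then have "k \<noteq> 0" by presburger
        then show "Od$k = schurP N k x" using \<open>odd k\<close> by (simp add: Od_def F_def schurP_def)
      qed
      then show "of_nat (card (permutations_of_multiset lam)) * prod_mset (image_mset (\<lambda>k. Od$k) lam) = mult lam * V N lam x"
        by (simp add: V_def mult_def card_perm_rat)
    qed
    finally show ?thesis .
  qed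
  define S where "S = {lam :: nat multiset. (\<forall>k\<in>#lam. odd k) \<and> sum_mset lam = 2*n}"
  have SU: "S = (\<Union>j\<in>{..2*n}. Sj j (2*n))"
  proof (rule set_eqI, rule iffI)
    fix lam assume "lam \<in> S"
    moreover have "\<forall>k\<in>#lam. odd k \<Longrightarrow> \<forall>k\<in>#lam. k > 0" by (auto intro: odd_pos)
    ultimately have "size lam \<le> 2*n" "lam \<in> Sj (size lam) (2*n)"
      using size_le_sum_mset[of lam] by (auto simp: S_def Sj_def)
    then show "lam \<in> (\<Union>j\<in>{..2*n}. Sj j (2*n))" by blast
  qed (auto simp: S_def Sj_def)
  have C: "(\<Sum>lam\<in>S. w (size lam) * mult lam * V N lam x) = (\<Sum>j\<le>2*n. w j * T j)"
  proof -
    have "(\<Sum>lam\<in>S. w (size lam) * mult lam * V N lam x) = (\<Sum>j\<le>2*n. \<Sum>lam\<in>Sj j (2*n). w (size lam) * mult lam * V N lam x)"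
      unfolding SU by (rule sum.UNION_disjoint) (auto simp: finite_Sj[unfolded Sj_def] Sj_def)
    also have "\<dots> = (\<Sum>j\<le>2*n. w j * T j)"
    proof (rule sum.cong[OF refl])
      fix j assume "j \<in> {..2*n}"
      have "(\<Sum>lam\<in>Sj j (2*n). w (size lam) * mult lam * V N lam x) = (\<Sum>lam\<in>Sj j (2*n). w j * (mult lam * V N lam x))"
        by (rule sum.cong) (auto simp: Sj_def)
      then show "(\<Sum>lam\<in>Sj j (2*n). w (size lam) * mult lam * V N lam x) = w j * T j"
        by (simp add: B sum_distrib_left)
    qed
    finally show ?thesis .
  qed
  have Tz: "T j = 0" if "odd j \<or> j = 0 \<or> j > 2*n" for j
  proof -
    have "Sj j (2*n) = {}"
    proof (rule ccontr)
      assume "Sj j (2*n) \<noteq> {}"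
      then obtain lam where lam: "\<forall>k\<in>#lam. odd k" "sum_mset lam = 2*n" "size lam = j" by (auto simp: Sj_def)
      have "\<forall>k\<in>#lam. k > 0" using lam(1) by (auto intro: odd_pos)
      then have "j \<le> 2*n" using size_le_sum_mset[of lam] lam by simp
      moreover have "even j" using parity_sum_mset[OF lam(1)] lam by simp
      moreover have "j \<noteq> 0" using lam assms by (cases "lam = {#}") (auto simp: nonempty_has_size)
      ultimately show False using that by auto
    qed
    then show ?thesis by (simp add: B)
  qed
  have L1: "(\<Sum>i=0..2*n. ((1/2::rat) gchoose i) * 4^i / 2 * T (2*i)) = (\<Sum>i\<in>{1..n}. ((1/2::rat) gchoose i) * 4^i / 2 * T (2*i))"
    by (rule sum.mono_neutral_right) (auto simp: Tz)
  have R1: "(\<Sum>j\<le>2*n. w j * T j) = (\<Sum>j\<in>(\<lambda>i. 2*i) ` {1..n}. w j * T j)"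
  proof (rule sum.mono_neutral_right)
    show "\<forall>j\<in>{..2*n} - (\<lambda>i. 2*i) ` {1..n}. w j * T j = 0"
    proof
      fix j assume j: "j \<in> {..2*n} - (\<lambda>i. 2*i) ` {1..n}"
      have "odd j \<or> j = 0"
      proof (rule ccontr)
        assume "\<not> (odd j \<or> j = 0)"
        then obtain i where "j = 2*i" "i \<ge> 1" by (auto elim!: evenE)
        then show False using j by auto
      qed
      then show "w j * T j = 0" by (simp add: Tz)
    qed
  qed auto
  also have "\<dots> = (\<Sum>i\<in>{1..n}. w (2*i) * T (2*i))"
    by (subst sum.reindex) (auto simp: inj_on_def)
  also have "\<dots> = (\<Sum>i\<in>{1..n}. ((1/2::rat) gchoose i) * 4^i / 2 * T (2*i))"
  proof (rule sum.cong[OF refl])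
    fix i assume "i \<in> {1..n}"
    then obtain m where m: "i = Suc m" by (cases i) auto
    have "(2 * i - 2) div 2 = m" using m by simp
    then have "w (2*i) = acoef m" by (simp add: w_def acoef_catalan)
    then show "w (2*i) * T (2*i) = ((1/2::rat) gchoose i) * 4^i / 2 * T (2*i)"
      by (simp add: acoef_def m)
  qed
  finally have R: "(\<Sum>j\<le>2*n. w j * T j) = (\<Sum>i\<in>{1..n}. ((1/2::rat) gchoose i) * 4^i / 2 * T (2*i))" .
  have "schurP N (2*n) x = (\<Sum>lam\<in>S. w (size lam) * mult lam * V N lam x)"
    using A L1 R C by simp
  then show ?thesis by (simp add: S_def w_def mult_def)
qed

end
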